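(* Let $M\in\mathbb{R}^{n_1\times n_2}$ have rank $r$ with compact singular value decomposition $M=U\Sigma V^*$, where $U\in\mathbb{R}^{n_1\times r}$, $V\in\mathbb{R}^{n_2\times r}$ have orthonormal columns and $\Sigma$ is diagonal with positive diagonal entries. Let $\Omega\subsetneq[n_1]\times[n_2]$ and $\tau>0$. Assume there is a matrix $Y\in\mathbb{R}^{n_1\times n_2}$ such that (a) $Y=\mathcal{P}_\Omega Y$, (b) $\mathcal{P}_{\mathrm{T}}Y=\frac{1}{\tau}M+UV^*$, (c) $\|\mathcal{P}_{\mathrm{T}^\perp}Y\|\le 1$. Then $M$ is the unique solution of $$\min_{X\in\mathbb{R}^{n_1\times n_2}}\ \|X\|_*+\frac{1}{2\tau}\|X\|_F^2\quad\text{subject to}\quad \mathcal{P}_\Omega X=\mathcal{P}_\Omega M.$$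
   Context: $[n]=\{1,\dots,n\}$. $\mathcal{P}_\Omega$ is the linear map on $\mathbb{R}^{n_1\times n_2}$ keeping the entries indexed by $\Omega$ and setting all others to zero. $\mathrm{T}=\{UX_1^*+X_2V^*: X_1\in\mathbb{R}^{n_2\times r},X_2\in\mathbb{R}^{n_1\times r}\}$, $\mathrm{T}^\perp$ its orthogonal complement with respect to the trace inner product $\langle X,Y\rangle=\mathrm{trace}(X^*Y)$, and $\mathcal{P}_{\mathrm{T}},\mathcal{P}_{\mathrm{T}^\perp}$ the orthogonal projections; explicitly $\mathcal{P}_{\mathrm{T}}Y=UU^*Y+YVV^*-UU^*YVV^*$. $\|\cdot\|$ is the spectral norm, $\|\cdot\|_*$ the nuclear norm (sum of singular values), $\|\cdot\|_F$ the Frobenius norm. *)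

theory Defs
  imports "HOL-Analysis.Analysis"
begin

text \<open>Matrices are real^'n^'m (m rows, n columns); index types are finite.\<close>

definition P_Omega :: "('m \<times> 'n) set \<Rightarrow> real^'n^'m \<Rightarrow> real^'n^'m" where
  "P_Omega \<Omega> X = (\<chi> i j. if (i, j) \<in> \<Omega> then X $ i $ j else 0)"

definition P_T :: "real^'r^'m \<Rightarrow> real^'r^'n \<Rightarrow> real^'n^'m \<Rightarrow> real^'n^'m" where
  "P_T U V Y = U ** transpose U ** Y + Y ** V ** transpose V
              - U ** transpose U ** Y ** V ** transpose V"

definition P_Tperp :: "real^'r^'m \<Rightarrow> real^'r^'n \<Rightarrow> real^'n^'m \<Rightarrow> real^'n^'m" where
  "P_Tperp U V Y = Y - P_T U V Y"

definition spectral_norm :: "real^'n^'m \<Rightarrow> real" where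
  "spectral_norm A = onorm (\<lambda>x. A *v x)"

definition frob_norm :: "real^'n^'m \<Rightarrow> real" where
  "frob_norm A = sqrt (\<Sum>i\<in>UNIV. \<Sum>j\<in>UNIV. (A $ i $ j)^2)"

definition psd_sqrt :: "real^'n^'n \<Rightarrow> real^'n^'n" where
  "psd_sqrt A = (THE S. transpose S = S \<and> (\<forall>x. 0 \<le> x \<bullet> (S *v x)) \<and> S ** S = A)"

text \<open>Nuclear norm = sum of singular values = trace of (A^T A)^(1/2).\<close>
definition nuclear_norm :: "real^'n^'m \<Rightarrow> real" where
  "nuclear_norm A = trace (psd_sqrt (transpose A ** A))"

end

theory Submission
  imports Defs
begin


lemma quad_nonpos_lin_zero:
  fixes c d :: real
  assumes "\<And>t. 2 * t * c + t^2 * d \<le> 0"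
  shows "c = 0"
proof (rule ccontr)
  assume "c \<noteq> 0"
  define t where "t = c / (\<bar>d\<bar> + 1)"
  have pos: "\<bar>d\<bar> + 1 > 0" by simp
  have "2 * t * c + t^2 * d \<le> 0" by (rule assms)
  hence "(2 * t * c + t^2 * d) * (\<bar>d\<bar> + 1)^2 \<le> 0"
    by (simp add: mult_nonpos_nonneg)
  also have "(2 * t * c + t^2 * d) * (\<bar>d\<bar> + 1)^2 = c^2 * (2 * (\<bar>d\<bar> + 1) + d)"
  proof -
    have "(2 * (c / e) * c + (c / e)^2 * d) * e^2 = c^2 * (2 * e + d)" if "e \<noteq> 0" for e
      using that by (simp add: field_simps power2_eq_square)
    thus ?thesis using pos unfolding t_def by simp
  qed
  finally have "c^2 * (2 * (\<bar>d\<bar> + 1) + d) \<le> 0" .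
  moreover have "2 * (\<bar>d\<bar> + 1) + d > 0" by (cases "d \<ge> 0") auto
  moreover have "c^2 > 0" using \<open>c \<noteq> 0\<close> by simp
  ultimately show False by (simp add: mult_le_0_iff)
qed

lemma spectral_sub:
  fixes A :: "real^'n^'n"
  assumes sym: "\<And>x y. (A *v x) \<bullet> y = x \<bullet> (A *v y)"
  shows "subspace W \<Longrightarrow> (\<forall>x\<in>W. A *v x \<in> W) \<Longrightarrow>
    \<exists>B. B \<subseteq> W \<and> (\<forall>b\<in>B. norm b = 1 \<and> A *v b = (b \<bullet> (A *v b)) *\<^sub>R b)
       \<and> pairwise orthogonal B \<and> W \<subseteq> span B"
proof (induction "dim W" arbitrary: W rule: less_induct)
  case less
  show ?case
  proof (cases "W \<subseteq> {0}")
    case True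
    then show ?thesis by (intro exI[of _ "{}"]) auto
  next
    case False
    then obtain w where w: "w \<in> W" "w \<noteq> 0" by auto
    define K where "K = W \<inter> sphere 0 1"
    have "compact K" unfolding K_def
      by (simp add: closed_subspace closed_Int_compact less.prems(1))
    moreover have "K \<noteq> {}"
    proof -
      have "(1 / norm w) *\<^sub>R w \<in> K" using w less.prems(1)
        by (simp add: K_def subspace_mul)
      thus ?thesis by blast
    qed
    moreover have "continuous_on K (\<lambda>x. x \<bullet> (A *v x))"
      by (intro continuous_intros linear_continuous_on bounded_linear.linear) simp
    ultimately obtain x where xK: "x \<in> K" and xmax: "\<And>y. y \<in> K \<Longrightarrow> y \<bullet> (A *v y) \<le> x \<bullet> (A *v x)"
      using continuous_attains_sup[of K "\<lambda>x. x \<bullet> (A *v x)"] by auto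
    define l where "l = x \<bullet> (A *v x)"
    have xW: "x \<in> W" and xn: "norm x = 1" using xK by (auto simp: K_def)
    have xx: "x \<bullet> x = 1" using xn by (simp add: norm_eq_1)
    have quad: "v \<bullet> (A *v v) \<le> l * (v \<bullet> v)" if "v \<in> W" for v
    proof (cases "v = 0")
      case True thus ?thesis by simp
    next
      case False
      have "(1 / norm v) *\<^sub>R v \<in> K" using that False less.prems(1)
        by (simp add: K_def subspace_mul)
      hence "((1 / norm v) *\<^sub>R v) \<bullet> (A *v ((1 / norm v) *\<^sub>R v)) \<le> l"
        unfolding l_def by (rule xmax)
      hence "(v \<bullet> (A *v v)) / (norm v)^2 \<le> l"
        by (simp add: matrix_vector_mult_scaleR power2_eq_square)
      thus ?thesis using False by (simp add: divide_le_eq power2_norm_eq_inner)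
    qed
    have orth: "y \<bullet> (A *v x) = 0" if "y \<in> W" "y \<bullet> x = 0" for y
    proof -
      have "2 * t * (y \<bullet> (A *v x)) + t^2 * (y \<bullet> (A *v y) - l * (y \<bullet> y)) \<le> 0" for t
      proof -
        have "x + t *\<^sub>R y \<in> W" using that xW less.prems(1)
          by (simp add: subspace_add subspace_mul)
        from quad[OF this] have "(x + t *\<^sub>R y) \<bullet> (A *v (x + t *\<^sub>R y)) \<le> l * ((x + t *\<^sub>R y) \<bullet> (x + t *\<^sub>R y))" .
        moreover have "(x + t *\<^sub>R y) \<bullet> (A *v (x + t *\<^sub>R y)) = l + 2 * t * (y \<bullet> (A *v x)) + t^2 * (y \<bullet> (A *v y))"
        proof -
          have "x \<bullet> (A *v y) = y \<bullet> (A *v x)" using sym[of x y] by (simp add: inner_commute)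
          thus ?thesis
            by (simp add: matrix_vector_right_distrib matrix_vector_mult_scaleR inner_add_left inner_add_right l_def algebra_simps power2_eq_square)
        qed
        moreover have "(x + t *\<^sub>R y) \<bullet> (x + t *\<^sub>R y) = 1 + t^2 * (y \<bullet> y)"
          using xx that(2) by (simp add: inner_add_left inner_add_right inner_commute algebra_simps power2_eq_square)
        ultimately have h: "l + 2 * t * (y \<bullet> (A *v x)) + t^2 * (y \<bullet> (A *v y)) \<le> l * (1 + t^2 * (y \<bullet> y))"
          by metis
        have e1: "l * (1 + t^2 * (y \<bullet> y)) = l + t^2 * (l * (y \<bullet> y))" by (simp add: algebra_simps)
        have e2: "t^2 * (y \<bullet> (A *v y) - l * (y \<bullet> y)) = t^2 * (y \<bullet> (A *v y)) - t^2 * (l * (y \<bullet> y))"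
          by (simp add: algebra_simps)
        show ?thesis using h e1 e2 by linarith
      qed
      thus ?thesis by (rule quad_nonpos_lin_zero)
    qed
    have AxW: "A *v x \<in> W" using less.prems(2) xW by blast
    have eig: "A *v x = l *\<^sub>R x"
    proof -
      define y where "y = A *v x - l *\<^sub>R x"
      have yW: "y \<in> W" unfolding y_def using AxW xW less.prems(1)
        by (simp add: subspace_diff subspace_mul)
      have yx: "y \<bullet> x = 0" unfolding y_def using xx
        by (simp add: inner_diff_left inner_diff_right l_def inner_commute)
      have "y \<bullet> y = y \<bullet> (A *v x) - l * (y \<bullet> x)" unfolding y_def
        by (simp add: inner_diff_right)
      also have "\<dots> = 0" using orth[OF yW yx] yx by simp
      finally show ?thesis unfolding y_def by simp
    qed
    define W' where "W' = {y \<in> W. y \<bullet> x = 0}"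
    have sW': "subspace W'" using less.prems(1) unfolding W'_def subspace_def
      by (auto simp: inner_add_left)
    have iW': "\<forall>y\<in>W'. A *v y \<in> W'"
    proof
      fix y assume "y \<in> W'"
      hence "y \<in> W" "y \<bullet> x = 0" by (auto simp: W'_def)
      moreover have "(A *v y) \<bullet> x = y \<bullet> (A *v x)" by (rule sym)
      ultimately show "A *v y \<in> W'" using less.prems(2) eig by (auto simp: W'_def)
    qed
    have "W' \<subset> W" using xW xx unfolding W'_def by force
    hence "dim W' < dim W"
      using dim_psubset[of W' W] span_eq_iff[of W'] span_eq_iff[of W] sW' less.prems(1) by metis
    from less.hyps[OF this sW' iW'] obtain B' where B': "B' \<subseteq> W'"
      "\<forall>b\<in>B'. norm b = 1 \<and> A *v b = (b \<bullet> (A *v b)) *\<^sub>R b" "pairwise orthogonal B'" "W' \<subseteq> span B'"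
      by blast
    show ?thesis
    proof (intro exI[of _ "insert x B'"] conjI)
      show "insert x B' \<subseteq> W" using B'(1) xW by (auto simp: W'_def)
      show "\<forall>b\<in>insert x B'. norm b = 1 \<and> A *v b = (b \<bullet> (A *v b)) *\<^sub>R b"
        using B'(2) xn eig l_def by auto
      show "pairwise orthogonal (insert x B')"
        using B'(1,3) unfolding pairwise_insert
        by (auto simp: W'_def orthogonal_def inner_commute)
      show "W \<subseteq> span (insert x B')"
      proof
        fix v assume v: "v \<in> W"
        have "v - (v \<bullet> x) *\<^sub>R x \<in> W'" using v xW xx less.prems(1)
          by (simp add: W'_def subspace_diff subspace_mul inner_diff_left)
        hence "v - (v \<bullet> x) *\<^sub>R x \<in> span (insert x B')"
          using B'(4) span_mono[of B' "insert x B'"] by auto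
        moreover have "(v \<bullet> x) *\<^sub>R x \<in> span (insert x B')"
          by (simp add: span_base span_mul)
        ultimately have "(v - (v \<bullet> x) *\<^sub>R x) + (v \<bullet> x) *\<^sub>R x \<in> span (insert x B')"
          by (rule span_add)
        thus "v \<in> span (insert x B')" by simp
      qed
    qed
  qed
qed



declare transpose_matrix_vector[simp del]

lemma adj: "((A::real^'n^'m) *v x) \<bullet> y = x \<bullet> (transpose A *v y)"
  by (metis dot_lmul_matrix inner_commute transpose_matrix_vector)

definition onb :: "(real^'n) set \<Rightarrow> bool" where
  "onb B \<longleftrightarrow> finite B \<and> (\<forall>b\<in>B. norm b = 1) \<and> pairwise orthogonal B \<and> UNIV \<subseteq> span B"

lemma onb_coord:
  assumes "onb B" "b \<in> B"
  shows "b \<bullet> (\<Sum>c\<in>B. u c *\<^sub>R c) = u b"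
proof -
  have "b \<bullet> (\<Sum>c\<in>B. u c *\<^sub>R c) = (\<Sum>c\<in>B. u c * (b \<bullet> c))"
    by (simp add: inner_sum_right)
  also have "\<dots> = (\<Sum>c\<in>B. if c = b then u b else 0)"
  proof (rule sum.cong)
    fix c assume c: "c \<in> B"
    show "u c * (b \<bullet> c) = (if c = b then u b else 0)"
    proof (cases "c = b")
      case True thus ?thesis using assms c by (simp add: onb_def norm_eq_1)
    next
      case False thus ?thesis using assms c by (auto simp: onb_def pairwise_def orthogonal_def)
    qed
  qed simp
  also have "\<dots> = u b" using assms by (simp add: onb_def)
  finally show ?thesis .
qed

lemma onb_expand:
  assumes "onb B"
  shows "x = (\<Sum>b\<in>B. (b \<bullet> x) *\<^sub>R b)"
proof -
  have "x \<in> span B" using assms by (auto simp: onb_def)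
  then obtain u where u: "x = (\<Sum>c\<in>B. u c *\<^sub>R c)"
    using span_finite[of B] assms by (auto simp: onb_def)
  have "(\<Sum>b\<in>B. (b \<bullet> x) *\<^sub>R b) = (\<Sum>b\<in>B. u b *\<^sub>R b)"
    by (rule sum.cong) (use u onb_coord[OF assms] in auto)
  thus ?thesis using u by simp
qed

lemma onb_ext:
  assumes "onb B" "\<And>b. b \<in> B \<Longrightarrow> b \<bullet> y = b \<bullet> z"
  shows "y = z"
  using onb_expand[OF assms(1), of y] onb_expand[OF assms(1), of z] assms(2)
  by (metis (no_types, lifting) sum.cong)

lemma onb_delta:
  assumes "onb B"
  shows "(\<Sum>b\<in>B. b$j * b$k) = (if j = k then 1 else 0)"
proof -
  have "axis k (1::real) = (\<Sum>b\<in>B. (b \<bullet> axis k 1) *\<^sub>R b)" by (rule onb_expand[OF assms])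
  hence "axis k (1::real) $ j = (\<Sum>b\<in>B. (b \<bullet> axis k 1) *\<^sub>R b) $ j" by simp
  moreover have "(\<Sum>b\<in>B. (b \<bullet> axis k 1) *\<^sub>R b) $ j = (\<Sum>b\<in>B. b$j * b$k)"
    by (simp add: sum_component inner_axis mult.commute)
  moreover have "axis k (1::real) $ j = (if j = k then 1 else 0)" by (simp add: axis_def)
  ultimately show ?thesis by simp
qed

lemma spectral:
  fixes A :: "real^'n^'n"
  assumes "transpose A = A"
  obtains B where "onb B" "\<And>b. b \<in> B \<Longrightarrow> A *v b = (b \<bullet> (A *v b)) *\<^sub>R b"
proof -
  have sym: "\<And>x y. (A *v x) \<bullet> y = x \<bullet> (A *v y)" using adj[of A] assms by simp
  obtain B where B: "(\<forall>b\<in>B. norm b = 1 \<and> A *v b = (b \<bullet> (A *v b)) *\<^sub>R b)"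
       "pairwise orthogonal B" "UNIV \<subseteq> span B"
    using spectral_sub[OF sym, of UNIV] by auto
  have "0 \<notin> B" using B(1) by force
  hence "independent B" using pairwise_orthogonal_independent B(2) by blast
  hence "finite B" using finiteI_independent by blast
  thus ?thesis using that B by (auto simp: onb_def)
qed

definition outer_sum :: "(real^'n) set \<Rightarrow> (real^'n \<Rightarrow> real) \<Rightarrow> real^'n^'n" where
  "outer_sum B g = (\<chi> i j. \<Sum>b\<in>B. g b * b$i * b$j)"

lemma outer_sum_mv: "outer_sum B g *v x = (\<Sum>b\<in>B. (g b * (b \<bullet> x)) *\<^sub>R b)"
proof -
  have "(outer_sum B g *v x) $ i = (\<Sum>b\<in>B. (g b * (b \<bullet> x)) *\<^sub>R b) $ i" for i
  proof -
    have "(outer_sum B g *v x) $ i = (\<Sum>j\<in>UNIV. \<Sum>b\<in>B. g b * b$i * b$j * x$j)"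
      by (simp add: outer_sum_def matrix_vector_mult_def sum_distrib_right)
    also have "\<dots> = (\<Sum>b\<in>B. \<Sum>j\<in>UNIV. g b * b$i * b$j * x$j)" by (rule sum.swap)
    also have "\<dots> = (\<Sum>b\<in>B. (g b * (b \<bullet> x)) *\<^sub>R b) $ i"
      by (simp add: sum_component inner_vec_def sum_distrib_left sum_distrib_right mult_ac)
    finally show ?thesis .
  qed
  thus ?thesis by (simp add: vec_eq_iff)
qed

lemma outer_sum_transpose: "transpose (outer_sum B g) = outer_sum B g"
  by (simp add: outer_sum_def transpose_def mult_ac)

lemma outer_sum_coord: "onb B \<Longrightarrow> b \<in> B \<Longrightarrow> b \<bullet> (outer_sum B g *v x) = g b * (b \<bullet> x)"
  by (simp add: outer_sum_mv onb_coord)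

lemma outer_sum_trace: "onb B \<Longrightarrow> trace (outer_sum B g) = (\<Sum>b\<in>B. g b)"
proof -
  assume o: "onb B"
  have "trace (outer_sum B g) = (\<Sum>i\<in>UNIV. \<Sum>b\<in>B. g b * b$i * b$i)"
    by (simp add: trace_def outer_sum_def)
  also have "\<dots> = (\<Sum>b\<in>B. \<Sum>i\<in>UNIV. g b * b$i * b$i)" by (rule sum.swap)
  also have "\<dots> = (\<Sum>b\<in>B. g b * (b \<bullet> b))"
    by (simp add: inner_vec_def sum_distrib_left mult_ac)
  also have "\<dots> = (\<Sum>b\<in>B. g b)" using o by (simp add: onb_def norm_eq_1)
  finally show ?thesis .
qed

lemma trace_onb:
  assumes "onb B"
  shows "trace C = (\<Sum>b\<in>B. b \<bullet> (C *v b))"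
proof -
  have "(\<Sum>b\<in>B. b \<bullet> (C *v b)) = (\<Sum>b\<in>B. \<Sum>i\<in>UNIV. \<Sum>j\<in>UNIV. C$i$j * (b$i * b$j))"
    by (simp add: inner_vec_def matrix_vector_mult_def sum_distrib_left mult_ac)
  also have "\<dots> = (\<Sum>i\<in>UNIV. \<Sum>b\<in>B. \<Sum>j\<in>UNIV. C$i$j * (b$i * b$j))" by (rule sum.swap)
  also have "\<dots> = (\<Sum>i\<in>UNIV. \<Sum>j\<in>UNIV. \<Sum>b\<in>B. C$i$j * (b$i * b$j))"
    by (rule sum.cong[OF refl], rule sum.swap)
  also have "\<dots> = (\<Sum>i\<in>UNIV. \<Sum>j\<in>UNIV. C$i$j * (if i = j then 1 else 0))"
    by (simp add: sum_distrib_left[symmetric] onb_delta[OF assms])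
  also have "\<dots> = (\<Sum>i\<in>UNIV. \<Sum>j\<in>UNIV. if j = i then C$i$i else 0)"
    by (intro sum.cong) auto
  also have "\<dots> = trace C" by (simp add: trace_def)
  finally show ?thesis by simp
qed

definition psd :: "real^'n^'n \<Rightarrow> bool" where
  "psd P \<longleftrightarrow> transpose P = P \<and> (\<forall>x. 0 \<le> x \<bullet> (P *v x))"

lemma psd_sym: "psd P \<Longrightarrow> (P *v x) \<bullet> y = x \<bullet> (P *v y)"
  using adj[of P x y] by (simp add: psd_def)

lemma sqrt_eig:
  assumes P: "psd P" and PP: "P ** P = A" and ev: "A *v v = \<mu> *\<^sub>R v"
  shows "P *v v = sqrt \<mu> *\<^sub>R v"
proof (cases "v = 0")
  case True thus ?thesis by simp
next
  case False
  have AP: "A *v z = P *v (P *v z)" for z using PP by (simp add: matrix_vector_mul_assoc)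
  have "\<mu> * (v \<bullet> v) = v \<bullet> (A *v v)" using ev by simp
  also have "\<dots> = (P *v v) \<bullet> (P *v v)" using AP psd_sym[OF P, of v "P *v v"] by simp
  finally have "\<mu> * (v \<bullet> v) \<ge> 0" by simp
  moreover have "v \<bullet> v > 0" using False by simp
  ultimately have mu: "\<mu> \<ge> 0" by (simp add: zero_le_mult_iff)
  define s where "s = sqrt \<mu>"
  have s: "s \<ge> 0" "s * s = \<mu>" using mu by (auto simp: s_def)
  define w where "w = P *v v - s *\<^sub>R v"
  have "P *v w + s *\<^sub>R w = A *v v - \<mu> *\<^sub>R v"
    unfolding w_def using AP[of v] s
    by (simp add: matrix_vector_mult_diff_distrib matrix_vector_mult_scaleR algebra_simps)
  hence Pw: "P *v w + s *\<^sub>R w = 0" using ev by simp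
  have "w \<bullet> (P *v w) + s * (w \<bullet> w) = w \<bullet> (P *v w + s *\<^sub>R w)" by (simp add: inner_add_right)
  hence eq0: "w \<bullet> (P *v w) + s * (w \<bullet> w) = 0" using Pw by simp
  have nn: "w \<bullet> (P *v w) \<ge> 0" using P by (simp add: psd_def)
  have "w = 0"
  proof (cases "s = 0")
    case False
    hence "s > 0" using s by simp
    have "s * (w \<bullet> w) \<ge> 0" using s by simp
    hence "s * (w \<bullet> w) = 0" using eq0 nn by linarith
    thus ?thesis using \<open>s > 0\<close> by simp
  next
    case True
    hence w: "w = P *v v" by (simp add: w_def)
    have "w \<bullet> w = v \<bullet> (A *v v)" using AP[of v] psd_sym[OF P, of v "P *v v"] w by simp
    also have "\<dots> = 0" using ev s True by simp
    finally show ?thesis by simp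
  qed
  thus ?thesis by (simp add: w_def s_def)
qed

lemma psd_sqrt_eq:
  assumes Q: "psd Q" and QQ: "Q ** Q = A"
  shows "psd_sqrt A = Q"
  unfolding psd_sqrt_def
proof (rule the_equality)
  show "transpose Q = Q \<and> (\<forall>x. 0 \<le> x \<bullet> (Q *v x)) \<and> Q ** Q = A" using Q QQ by (simp add: psd_def)
next
  fix S assume S0: "transpose S = S \<and> (\<forall>x. 0 \<le> x \<bullet> (S *v x)) \<and> S ** S = A"
  hence S: "psd S" and SS: "S ** S = A" by (auto simp: psd_def)
  have "transpose A = A" using QQ Q by (auto simp: psd_def matrix_transpose_mul)
  then obtain B where B: "onb B" and ev: "\<And>b. b \<in> B \<Longrightarrow> A *v b = (b \<bullet> (A *v b)) *\<^sub>R b"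
    by (rule spectral) blast
  show "S = Q"
  proof (subst matrix_eq, intro allI)
    fix x
    show "S *v x = Q *v x"
    proof (rule onb_ext[OF B])
      fix b assume b: "b \<in> B"
      have "b \<bullet> (S *v x) = (S *v b) \<bullet> x" using psd_sym[OF S] by simp
      also have "\<dots> = (Q *v b) \<bullet> x"
        using sqrt_eig[OF S SS ev[OF b]] sqrt_eig[OF Q QQ ev[OF b]] by simp
      also have "\<dots> = b \<bullet> (Q *v x)" using psd_sym[OF Q] by simp
      finally show "b \<bullet> (S *v x) = b \<bullet> (Q *v x)" .
    qed
  qed
qed

definition fip :: "real^'n^'m \<Rightarrow> real^'n^'m \<Rightarrow> real" where
  "fip A B = (\<Sum>i\<in>UNIV. \<Sum>j\<in>UNIV. A$i$j * B$i$j)"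

lemma fip_trace: "fip A B = trace (transpose A ** B)"
proof -
  have "trace (transpose A ** B) = (\<Sum>j\<in>UNIV. \<Sum>i\<in>UNIV. A$i$j * B$i$j)"
    by (simp add: trace_def matrix_matrix_mult_def transpose_def)
  moreover have "fip A B = (\<Sum>j\<in>UNIV. \<Sum>i\<in>UNIV. A$i$j * B$i$j)"
    unfolding fip_def by (rule sum.swap)
  ultimately show ?thesis by simp
qed

lemma nuc_ge:
  fixes Z X :: "real^'n^'m"
  assumes Z: "\<And>x. norm (Z *v x) \<le> norm x"
  shows "fip Z X \<le> nuclear_norm X"
proof -
  define A where "A = transpose X ** X"
  have "transpose A = A" by (simp add: A_def matrix_transpose_mul)
  then obtain B where B: "onb B" and ev: "\<And>b. b \<in> B \<Longrightarrow> A *v b = (b \<bullet> (A *v b)) *\<^sub>R b"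
    by (rule spectral) blast
  define mu where "mu b = b \<bullet> (A *v b)" for b
  have mu: "mu b = (X *v b) \<bullet> (X *v b)" for b
    unfolding mu_def A_def by (simp add: adj matrix_vector_mul_assoc[symmetric] inner_commute)
  define P where "P = outer_sum B (\<lambda>b. sqrt (mu b))"
  have Ppsd: "psd P"
  proof -
    have "0 \<le> x \<bullet> (P *v x)" for x
    proof -
      have "x \<bullet> (P *v x) = (\<Sum>b\<in>B. sqrt (mu b) * ((b \<bullet> x) * (b \<bullet> x)))"
        by (simp add: P_def outer_sum_mv inner_sum_right inner_commute mult_ac)
      also have "\<dots> \<ge> 0" by (rule sum_nonneg, rule mult_nonneg_nonneg[OF _ zero_le_square]) (simp add: mu)
      finally show ?thesis .
    qed
    thus ?thesis by (simp add: psd_def P_def outer_sum_transpose)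
  qed
  have PP: "P ** P = A"
  proof (subst matrix_eq, intro allI)
    fix x
    show "(P ** P) *v x = A *v x"
    proof (rule onb_ext[OF B])
      fix b assume b: "b \<in> B"
      have "b \<bullet> ((P ** P) *v x) = sqrt (mu b) * sqrt (mu b) * (b \<bullet> x)"
        using b B by (simp add: matrix_vector_mul_assoc[symmetric] P_def outer_sum_coord)
      also have "\<dots> = mu b * (b \<bullet> x)" using mu by simp
      also have "\<dots> = ((b \<bullet> (A *v b)) *\<^sub>R b) \<bullet> x" by (simp add: mu_def)
      also have "\<dots> = (A *v b) \<bullet> x" using ev[OF b] by metis
      also have "\<dots> = b \<bullet> (A *v x)" using adj[of A] \<open>transpose A = A\<close> by simp
      finally show "b \<bullet> ((P ** P) *v x) = b \<bullet> (A *v x)" .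
    qed
  qed
  have nuc: "nuclear_norm X = (\<Sum>b\<in>B. sqrt (mu b))"
    unfolding nuclear_norm_def A_def[symmetric] psd_sqrt_eq[OF Ppsd PP] P_def
    by (rule outer_sum_trace[OF B])
  have "fip Z X = (\<Sum>b\<in>B. b \<bullet> ((transpose Z ** X) *v b))"
    by (simp add: fip_trace trace_onb[OF B])
  also have "\<dots> = (\<Sum>b\<in>B. (Z *v b) \<bullet> (X *v b))"
    by (rule sum.cong[OF refl]) (simp add: adj matrix_vector_mul_assoc[symmetric])
  also have "\<dots> \<le> (\<Sum>b\<in>B. sqrt (mu b))"
  proof (rule sum_mono)
    fix b assume b: "b \<in> B"
    have "(Z *v b) \<bullet> (X *v b) \<le> norm (Z *v b) * norm (X *v b)" by (rule norm_cauchy_schwarz)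
    also have "\<dots> \<le> 1 * norm (X *v b)"
      using Z[of b] b B by (intro mult_right_mono) (auto simp: onb_def)
    also have "\<dots> = sqrt (mu b)" by (simp add: mu norm_eq_sqrt_inner)
    finally show "(Z *v b) \<bullet> (X *v b) \<le> sqrt (mu b)" .
  qed
  finally show ?thesis using nuc by simp
qed



lemma fip_add_left: "fip (A + B) C = fip A C + fip B C"
  by (simp add: fip_def algebra_simps sum.distrib)
lemma fip_add_right: "fip A (B + C) = fip A B + fip A C"
  by (simp add: fip_def algebra_simps sum.distrib)
lemma fip_scale_left: "fip (c *\<^sub>R A) B = c * fip A B"
  by (simp add: fip_def sum_distrib_left mult_ac)
lemma fip_comm: "fip A B = fip B A"
  by (simp add: fip_def mult_ac)

lemma frob_sq: "(frob_norm A)^2 = fip A A"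
proof -
  have "0 \<le> (\<Sum>i\<in>UNIV. \<Sum>j\<in>UNIV. (A $ i $ j)^2)" by (intro sum_nonneg) simp
  thus ?thesis by (simp add: frob_norm_def fip_def power2_eq_square)
qed

lemma fip_pos: "H \<noteq> 0 \<Longrightarrow> fip H H > 0"
proof -
  assume "H \<noteq> 0"
  then obtain i j where ij: "H $ i $ j \<noteq> 0" by (metis vec_eq_iff zero_index)
  have "0 < (\<Sum>j'\<in>UNIV. H $ i $ j' * H $ i $ j')"
    by (rule sum_pos2[of UNIV j]) (use ij in \<open>auto simp: zero_less_mult_iff linorder_neq_iff\<close>)
  hence "0 < (\<Sum>i'\<in>UNIV. \<Sum>j'\<in>UNIV. H $ i' $ j' * H $ i' $ j')"
    by (intro sum_pos2[of UNIV i]) (auto intro: sum_nonneg)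
  thus ?thesis by (simp add: fip_def)
qed

theorem theorem3:
  fixes M :: "real^'n2^'n1" and U :: "real^'r^'n1" and V :: "real^'r^'n2"
    and S :: "real^'r^'r" and \<Omega> :: "('n1 \<times> 'n2) set" and \<tau> :: real
    and Y :: "real^'n2^'n1"
  assumes rank_M: "rank M = CARD('r)"
    and svd: "M = U ** S ** transpose V"
    and U_orth: "transpose U ** U = mat 1"
    and V_orth: "transpose V ** V = mat 1"
    and S_diag: "\<And>i j. i \<noteq> j \<Longrightarrow> S $ i $ j = 0"
    and S_pos: "\<And>i. S $ i $ i > 0"
    and \<Omega>_proper: "\<Omega> \<noteq> UNIV"
    and \<tau>_pos: "\<tau> > 0"
    and Ya: "Y = P_Omega \<Omega> Y"
    and Yb: "P_T U V Y = (1 / \<tau>) *\<^sub>R M + U ** transpose V"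
    and Yc: "spectral_norm (P_Tperp U V Y) \<le> 1"
  shows "\<forall>X. P_Omega \<Omega> X = P_Omega \<Omega> M \<and> X \<noteq> M \<longrightarrow>
           nuclear_norm M + 1 / (2 * \<tau>) * (frob_norm M)^2
           < nuclear_norm X + 1 / (2 * \<tau>) * (frob_norm X)^2"
proof (intro allI impI, elim conjE)
  fix X assume XO: "P_Omega \<Omega> X = P_Omega \<Omega> M" and XM: "X \<noteq> M"
  define Wm where "Wm = P_Tperp U V Y"
  define Z where "Z = U ** transpose V + Wm"
  define H where "H = X - M"
  have UtU: "transpose U *v (U *v z) = z" for z
    by (simp add: matrix_vector_mul_assoc U_orth)
  have VtV: "transpose V *v (V *v z) = z" for z
    by (simp add: matrix_vector_mul_assoc V_orth)
  have UU': "transpose U ** (U ** C) = C" for C :: "real^'k^'r"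
    by (simp add: matrix_mul_assoc U_orth)
  have VV': "transpose V ** (V ** C) = C" for C :: "real^'k^'r"
    by (simp add: matrix_mul_assoc V_orth)
  have Wx: "Wm *v x = Y *v x - U *v (transpose U *v (Y *v x)) - Y *v (V *v (transpose V *v x))
      + U *v (transpose U *v (Y *v (V *v (transpose V *v x))))" for x
    unfolding Wm_def P_Tperp_def P_T_def
    by (simp add: matrix_vector_mult_diff_rdistrib matrix_vector_mult_add_rdistrib
        matrix_vector_mul_assoc[symmetric])
  have F1: "transpose U *v (Wm *v x) = 0" for x
    unfolding Wx
    by (simp add: matrix_vector_mult_diff_distrib matrix_vector_right_distrib UtU)
  have F2: "Wm *v (V *v a) = 0" for a
    unfolding Wx by (simp add: VtV)
  have Zx: "norm (Z *v x) \<le> norm x" for x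
  proof -
    define a where "a = transpose V *v x"
    define p where "p = V *v a"
    define q where "q = x - p"
    have Vq: "transpose V *v q = 0"
      by (simp add: q_def p_def a_def matrix_vector_mult_diff_distrib VtV)
    have Wxq: "Wm *v x = Wm *v q"
      using F2[of a] by (simp add: q_def p_def matrix_vector_mult_diff_distrib)
    have Zxe: "Z *v x = U *v a + Wm *v q"
      by (simp add: Z_def matrix_vector_mult_add_rdistrib Wxq a_def matrix_vector_mul_assoc[symmetric])
    have o1: "(U *v a) \<bullet> (Wm *v q) = 0" by (simp add: adj F1)
    have n1: "(U *v a) \<bullet> (U *v a) = a \<bullet> a" by (simp add: adj UtU)
    have n2: "p \<bullet> p = a \<bullet> a" by (simp add: p_def adj VtV)
    have o2: "p \<bullet> q = 0" by (simp add: p_def adj Vq)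
    have xpq: "x = p + q" by (simp add: q_def)
    have nx: "x \<bullet> x = a \<bullet> a + q \<bullet> q"
      using o2 n2 by (subst (1 2) xpq) (simp add: inner_add_left inner_add_right inner_commute)
    have "norm (Wm *v q) \<le> onorm (\<lambda>x. Wm *v x) * norm q"
      by (rule onorm) simp
    also have "\<dots> \<le> 1 * norm q"
      using Yc by (intro mult_right_mono) (simp_all add: Wm_def spectral_norm_def)
    finally have "norm (Wm *v q) \<le> norm q" by simp
    hence nW: "(Wm *v q) \<bullet> (Wm *v q) \<le> q \<bullet> q" by (simp add: norm_le)
    have "(Z *v x) \<bullet> (Z *v x) = (U *v a) \<bullet> (U *v a) + 2 * ((U *v a) \<bullet> (Wm *v q)) + (Wm *v q) \<bullet> (Wm *v q)"
      unfolding Zxe by (simp add: inner_add_left inner_add_right inner_commute)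
    also have "\<dots> \<le> x \<bullet> x" using n1 o1 nW nx by simp
    finally show ?thesis by (simp add: norm_le)
  qed
  have St: "transpose S = S"
  proof -
    have "S$j$i = S$i$j" for i j using S_diag by (cases "i = j") auto
    thus ?thesis by (simp add: vec_eq_iff transpose_def)
  qed
  have Sv: "y \<bullet> (S *v y) = (\<Sum>i\<in>UNIV. S$i$i * (y$i)^2)" for y
  proof -
    have "(S *v y) $ i = S$i$i * y$i" for i
    proof -
      have "(S *v y) $ i = (\<Sum>j\<in>UNIV. S$i$j * y$j)" by (simp add: matrix_vector_mult_def)
      also have "\<dots> = (\<Sum>j\<in>UNIV. if j = i then S$i$i * y$i else 0)"
        by (rule sum.cong) (use S_diag in auto)
      finally show ?thesis by simp
    qed
    thus ?thesis by (simp add: inner_vec_def power2_eq_square mult_ac)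
  qed
  define Q where "Q = V ** (S ** transpose V)"
  have Qpsd: "psd Q"
  proof -
    have "transpose Q = Q" by (simp add: Q_def matrix_transpose_mul St matrix_mul_assoc)
    moreover have "0 \<le> x \<bullet> (Q *v x)" for x
    proof -
      have "x \<bullet> (Q *v x) = (transpose V *v x) \<bullet> (S *v (transpose V *v x))"
        by (simp add: Q_def matrix_vector_mul_assoc[symmetric] adj)
      also have "\<dots> \<ge> 0" unfolding Sv
        by (intro sum_nonneg mult_nonneg_nonneg) (auto intro: less_imp_le S_pos)
      finally show ?thesis .
    qed
    ultimately show ?thesis by (simp add: psd_def)
  qed
  have QQ: "Q ** Q = transpose M ** M"
    by (simp add: Q_def svd matrix_transpose_mul matrix_mul_assoc[symmetric] UU' VV' St)
  have nucM: "nuclear_norm M = trace Q"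
    unfolding nuclear_norm_def psd_sqrt_eq[OF Qpsd QQ] ..
  have "fip (U ** transpose V) M = trace Q"
    by (simp add: fip_trace Q_def svd matrix_transpose_mul matrix_mul_assoc[symmetric] UU')
  hence fUM: "fip (U ** transpose V) M = nuclear_norm M" using nucM by simp
  have UW: "transpose U ** Wm = 0"
    by (subst matrix_eq) (simp add: matrix_vector_mul_assoc[symmetric] F1)
  have WU: "transpose Wm ** U = 0"
  proof -
    have t0: "transpose (0::real^'n2^'r) = 0" by (simp add: transpose_def vec_eq_iff)
    have "transpose Wm ** U = transpose (transpose U ** Wm)" by (simp add: matrix_transpose_mul)
    thus ?thesis using UW t0 by simp
  qed
  have fWM: "fip Wm M = 0"
  proof -
    have "transpose Wm ** M = (transpose Wm ** U) ** (S ** transpose V)"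
      by (simp add: svd matrix_mul_assoc)
    thus ?thesis by (simp add: fip_trace WU trace_def)
  qed
  have fZM: "fip Z M = nuclear_norm M"
    by (simp add: Z_def fip_add_left fUM fWM)
  have ZY: "Z + (1 / \<tau>) *\<^sub>R M = Y"
    by (simp add: Z_def Wm_def P_Tperp_def Yb algebra_simps)
  have fYH: "fip Y H = 0"
  proof -
    have "Y $ i $ j * H $ i $ j = 0" for i j
    proof (cases "(i, j) \<in> \<Omega>")
      case True
      have "P_Omega \<Omega> X $ i $ j = P_Omega \<Omega> M $ i $ j" using XO by simp
      thus ?thesis using True by (simp add: P_Omega_def H_def)
    next
      case False
      have "Y $ i $ j = P_Omega \<Omega> Y $ i $ j" using Ya by simp
      thus ?thesis using False by (simp add: P_Omega_def)
    qed
    thus ?thesis unfolding fip_def by (intro sum.neutral ballI) simp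
  qed
  have Hpos: "fip H H > 0" using XM by (intro fip_pos) (simp add: H_def)
  have XMH: "X = M + H" by (simp add: H_def)
  have nX: "fip Z X \<le> nuclear_norm X" by (rule nuc_ge[OF Zx])
  have e1: "fip Z X = nuclear_norm M + fip Z H"
    by (simp add: XMH fip_add_right fZM)
  have e2: "fip X X = fip M M + 2 * fip M H + fip H H"
    by (simp add: XMH fip_add_right fip_add_left fip_comm[of H M])
  have e3: "fip Z H + (1 / \<tau>) * fip M H = 0"
    using fYH ZY by (metis fip_add_left fip_scale_left)
  have "nuclear_norm M + 1 / (2 * \<tau>) * fip M M < nuclear_norm M + 1 / (2 * \<tau>) * fip M M
       + (fip Z H + (1 / \<tau>) * fip M H) + 1 / (2 * \<tau>) * fip H H"
    using e3 Hpos \<tau>_pos by simp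
  also have "\<dots> = fip Z X + 1 / (2 * \<tau>) * fip X X"
    using \<tau>_pos by (simp add: e1 e2 field_simps)
  also have "\<dots> \<le> nuclear_norm X + 1 / (2 * \<tau>) * fip X X" using nX by simp
  finally show "nuclear_norm M + 1 / (2 * \<tau>) * (frob_norm M)^2
           < nuclear_norm X + 1 / (2 * \<tau>) * (frob_norm X)^2" by (simp add: frob_sq)
qed

end
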